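(* Let $n\ge3$, $k\ge0$ with $k<n\le 2k$, and consider the $n+k$ points $u_1,\dots,u_{n+k}$ arranged clockwise on a circle. There do not exist points $v_1,v_2,v_3,v_4$ among these such that the pairs $(v_1,v_2)$ and $(v_3,v_4)$ each have size at most $k+1$, and (1) $v_3$ and $v_4$ both lie in $(v_1,v_2)$, and (2) every point $u_i$, $i\in[n+k]$, lies in $(v_1,v_2)$ or in $(v_3,v_4)$.
   Context: Points $u_1,\dots,u_{n+k}$ are evenly spaced on a circle in clockwise order. For points $v=u_i$ and $v'=u_j$, the size of the pair $(v,v')$ is the number of points visited (including both endpoints) when travelling clockwise from $v$ to $v'$, i.e. $j-i+1$ modulo $n+k$, taken in $\{1,\dots,n+k\}$. A point $w$ lies in $(v,v')$ if $w$ is one of the points visited when travelling clockwise from $v$ to $v'$ (endpoints included). *)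

theory Defs
  imports Main
begin

text \<open>Points u_1,...,u_N (N = n+k) on a circle are represented by their indices i in {1..N}.
  The size of the pair (u_i,u_j) is (j - i + 1) modulo N, taken in {1..N}; i.e. ((j - i) mod N) + 1.\<close>

definition pair_size :: "nat \<Rightarrow> nat \<Rightarrow> nat \<Rightarrow> nat" where
  "pair_size N i j = nat ((int j - int i) mod int N) + 1"

definition lies_in :: "nat \<Rightarrow> nat \<Rightarrow> nat \<Rightarrow> nat \<Rightarrow> bool" where
  "lies_in N w i j \<longleftrightarrow> (int w - int i) mod int N \<le> (int j - int i) mod int N"

end

theory Submission
  imports Defs
begin

lemma mod_diff_small:
  fixes a b m :: int
  assumes "0 \<le> a" "a < m" "0 \<le> b" "b < m"
  shows "(a - b) mod m = (if b \<le> a then a - b else a - b + m)"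
proof (cases "b \<le> a")
  case True then show ?thesis using assms by (simp add: mod_pos_pos_trivial)
next
  case False
  have "(a - b) mod m = (a - b + m) mod m" by simp
  also have "\<dots> = a - b + m" using assms False by (intro mod_pos_pos_trivial) auto
  finally show ?thesis using False by simp
qed

theorem proposition5p2:
  fixes n k :: nat
  assumes "n \<ge> 3" and "k < n" and "n \<le> 2 * k"
  shows "\<not> (\<exists>v1 \<in> {1..n+k}. \<exists>v2 \<in> {1..n+k}. \<exists>v3 \<in> {1..n+k}. \<exists>v4 \<in> {1..n+k}.
            pair_size (n+k) v1 v2 \<le> k + 1 \<and> pair_size (n+k) v3 v4 \<le> k + 1 \<and>
            lies_in (n+k) v3 v1 v2 \<and> lies_in (n+k) v4 v1 v2 \<and>
            (\<forall>i \<in> {1..n+k}. lies_in (n+k) i v1 v2 \<or> lies_in (n+k) i v3 v4))"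
proof
  assume "\<exists>v1 \<in> {1..n+k}. \<exists>v2 \<in> {1..n+k}. \<exists>v3 \<in> {1..n+k}. \<exists>v4 \<in> {1..n+k}.
            pair_size (n+k) v1 v2 \<le> k + 1 \<and> pair_size (n+k) v3 v4 \<le> k + 1 \<and>
            lies_in (n+k) v3 v1 v2 \<and> lies_in (n+k) v4 v1 v2 \<and>
            (\<forall>i \<in> {1..n+k}. lies_in (n+k) i v1 v2 \<or> lies_in (n+k) i v3 v4)"
  then obtain v1 v2 v3 v4 where
    s1: "pair_size (n+k) v1 v2 \<le> k + 1" and s2: "pair_size (n+k) v3 v4 \<le> k + 1" and
    l3: "lies_in (n+k) v3 v1 v2" and l4: "lies_in (n+k) v4 v1 v2" and
    cov: "\<forall>i \<in> {1..n+k}. lies_in (n+k) i v1 v2 \<or> lies_in (n+k) i v3 v4"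
    by blast
  define m where "m = int (n+k)"
  have mpos: "m > 0" using assms m_def by simp
  define off where "off x = (int x - int v1) mod m" for x
  have offb: "0 \<le> off x \<and> off x < m" for x using mpos off_def by simp
  have rel: "(int y - int x) mod m = (off y - off x) mod m" for x y
  proof -
    have "int y - int x = (int y - int v1) - (int x - int v1)" by simp
    then show ?thesis unfolding off_def by (metis mod_diff_eq)
  qed
  define A where "A = off v2"
  define P where "P = off v3"
  define Q where "Q = off v4"
  have off1: "off v1 = 0" using off_def by simp
  have A_le: "A \<le> int k"
    using s1 unfolding pair_size_def A_def off_def m_def[symmetric] using mpos by linarith
  have P_le: "P \<le> A" using l3 unfolding lies_in_def m_def[symmetric] P_def A_def off_def .
  have Q_le: "Q \<le> A" using l4 unfolding lies_in_def m_def[symmetric] Q_def A_def off_def .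
  have s2': "(Q - P) mod m \<le> int k"
  proof -
    have "nat ((int v4 - int v3) mod m) \<le> k" using s2 by (simp add: pair_size_def m_def)
    then have "(int v4 - int v3) mod m \<le> int k" by simp
    then show ?thesis using rel[of v4 v3] P_def Q_def by simp
  qed
  have PQ: "P \<le> Q"
  proof (rule ccontr)
    assume "\<not> P \<le> Q"
    then have "(Q - P) mod m = Q - P + m"
      using mod_diff_small[of Q m P] offb P_def Q_def by auto
    then show False using s2' offb[of v4] Q_def P_le A_le m_def assms by linarith
  qed
  define i where "i = nat ((int v1 + A) mod m) + 1"
  have ii: "int i = (int v1 + A) mod m + 1" using i_def mpos by simp
  have irange: "i \<in> {1..n+k}" proof -
    have "(int v1 + A) mod m < m" using mpos by simp
    then have "int i \<le> m" using ii by linarith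
    then have "i \<le> n + k" using m_def by linarith
    then show ?thesis using i_def by simp
  qed
  have "off i = (int v1 + A + 1 - int v1) mod m"
    unfolding off_def ii by (metis mod_add_left_eq mod_diff_left_eq)
  also have "\<dots> = A + 1" using offb[of v2] A_def A_le m_def assms
    by (simp add: mod_pos_pos_trivial)
  finally have offi: "off i = A + 1" .
  have n1: "\<not> lies_in (n+k) i v1 v2"
    unfolding lies_in_def m_def[symmetric] using offi A_def off_def by simp
  have e1: "(off i - P) mod m = A + 1 - P"
    using offi P_le offb[of v3] P_def A_le m_def assms by (simp add: mod_pos_pos_trivial)
  have e2: "(Q - P) mod m = Q - P"
    using PQ offb[of v4] offb[of v3] P_def Q_def by (simp add: mod_pos_pos_trivial)
  have n2: "\<not> lies_in (n+k) i v3 v4"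
  proof
    assume "lies_in (n+k) i v3 v4"
    then have "(int i - int v3) mod m \<le> (int v4 - int v3) mod m"
      unfolding lies_in_def m_def by simp
    then have "(off i - P) mod m \<le> (Q - P) mod m" unfolding rel P_def Q_def .
    then show False using e1 e2 Q_le by linarith
  qed
  show False using cov irange n1 n2 by blast
qed

end
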